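(* Let $a,c\in\mathbb{N}$ and $b,d\in\mathbb{Z}$ with $a\neq c$. Then there exists a completely multiplicative function $f:\mathbb{N}\to\mathbb{S}^1$ such that $$\liminf_{n\to\infty}|f(an+b)-f(cn+d)|>0.$$
   Context: $\mathbb{N}=\{1,2,\dots\}$, $\mathbb{S}^1$ the unit circle in $\mathbb{C}$; completely multiplicative means $f(mn)=f(m)f(n)$ for all $m,n$. The expression is considered for $n$ large enough that $an+b,cn+d\ge1$. *)

theory Defs
  imports "HOL-Analysis.Analysis"
begin

text \<open>A completely multiplicative function from the positive integers to the unit
circle. Values at 0 are irrelevant (the domain is N = {1,2,...}).\<close>
definition cm_unimodular :: "(nat \<Rightarrow> complex) \<Rightarrow> bool" where
  "cm_unimodular f \<longleftrightarrow>
     (\<forall>n\<ge>1. norm (f n) = 1) \<and> (\<forall>m\<ge>1. \<forall>n\<ge>1. f (m * n) = f m * f n)"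

end

theory Submission
  imports Defs "HOL-Real_Asymp.Real_Asymp"
begin

theorem lemma4p1:
  fixes a c :: nat and b d :: int
  assumes "a \<ge> 1" and "c \<ge> 1" and "a \<noteq> c"
  shows "\<exists>f. cm_unimodular f \<and>
           liminf (\<lambda>n::nat. ereal (norm (f (nat (int a * int n + b)) - f (nat (int c * int n + d))))) > 0"
proof -
  define L where "L = ln (real a / real c)"
  have La: "real a > 0" "real c > 0" using assms by auto
  have "real a / real c \<noteq> 1" using assms La by (auto simp: field_simps)
  hence L0: "L \<noteq> 0" unfolding L_def using La by simp
  define t where "t = pi / L"
  define f where "f = (\<lambda>n::nat. cis (t * ln (real n)))"
  have cm: "cm_unimodular f"
    unfolding cm_unimodular_def f_def
    by (auto simp: ln_mult distrib_left cis_mult)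
  have lim1: "((\<lambda>n::nat. ln ((real a * real n + real_of_int b) / (real c * real n + real_of_int d))) \<longlongrightarrow> L) sequentially"
  proof -
    have "((\<lambda>n::nat. (real a * real n + real_of_int b) / (real c * real n + real_of_int d)) \<longlongrightarrow> real a / real c) sequentially"
      using La by real_asymp (simp add: divide_inverse)
    moreover have "real a / real c > 0" using La by simp
    ultimately show ?thesis unfolding L_def using assms by (intro tendsto_ln) auto
  qed
  have lim2: "((\<lambda>n::nat. norm (cis (t * ln ((real a * real n + real_of_int b) / (real c * real n + real_of_int d))) - 1)) \<longlongrightarrow> norm (cis (t * L) - 1)) sequentially"
    by (intro tendsto_intros lim1)
  have tL: "t * L = pi" unfolding t_def using L0 by simp
  have "norm (cis (t * L) - 1) = 2" unfolding tL by simp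
  note lim2 = lim2[unfolded this]
  have ev: "eventually (\<lambda>n::nat. norm (cis (t * ln ((real a * real n + real_of_int b) / (real c * real n + real_of_int d))) - 1)
      = norm (f (nat (int a * int n + b)) - f (nat (int c * int n + d)))) sequentially"
  proof -
    have "eventually (\<lambda>n::nat. n \<ge> nat (\<bar>b\<bar> + \<bar>d\<bar> + 1)) sequentially"
      by (rule eventually_ge_at_top)
    thus ?thesis
    proof eventually_elim
      case (elim n)
      have p1: "real a * real n + real_of_int b > 0"
      proof -
        have "real n \<ge> \<bar>b\<bar> + 1" using elim by linarith
        moreover have "real a * real n \<ge> real n" using assms mult_right_mono[of "1::real" _ "real n"] by simp
        ultimately show ?thesis by linarith
      qed
      have p2: "real c * real n + real_of_int d > 0"
      proof -
        have "real n \<ge> \<bar>d\<bar> + 1" using elim by linarith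
        moreover have "real c * real n \<ge> real n" using assms mult_right_mono[of "1::real" _ "real n"] by simp
        ultimately show ?thesis by linarith
      qed
      have e1: "real (nat (int a * int n + b)) = real a * real n + real_of_int b"
      proof -
        have z: "real_of_int (int a * int n + b) = real a * real n + real_of_int b" by simp
        hence "0 < real_of_int (int a * int n + b)" using p1 by simp
        hence "int a * int n + b > 0" by (simp only: of_int_0_less_iff)
        hence "int a * int n + b \<ge> 0" by simp
        hence "real (nat (int a * int n + b)) = real_of_int (int a * int n + b)" by simp
        thus ?thesis using z by simp
      qed
      have e2: "real (nat (int c * int n + d)) = real c * real n + real_of_int d"
      proof -
        have z: "real_of_int (int c * int n + d) = real c * real n + real_of_int d" by simp
        hence "0 < real_of_int (int c * int n + d)" using p2 by simp
        hence "int c * int n + d > 0" by (simp only: of_int_0_less_iff)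
        hence "int c * int n + d \<ge> 0" by simp
        hence "real (nat (int c * int n + d)) = real_of_int (int c * int n + d)" by simp
        thus ?thesis using z by simp
      qed
      define u where "u = t * ln (real a * real n + real_of_int b)"
      define v where "v = t * ln (real c * real n + real_of_int d)"
      have "t * ln ((real a * real n + real_of_int b) / (real c * real n + real_of_int d)) = u - v"
        unfolding u_def v_def using p1 p2 by (simp add: ln_div right_diff_distrib)
      moreover have "cis u - cis v = cis v * (cis (u - v) - 1)"
        by (simp add: cis_mult right_diff_distrib)
      hence "norm (cis u - cis v) = norm (cis (u - v) - 1)"
        by (simp add: norm_mult)
      ultimately show ?case unfolding f_def e1 e2 u_def v_def by simp
    qed
  qed
  have "((\<lambda>n::nat. norm (f (nat (int a * int n + b)) - f (nat (int c * int n + d)))) \<longlongrightarrow> 2) sequentially"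
    using tendsto_cong[OF ev] lim2 by simp
  hence "((\<lambda>n::nat. ereal (norm (f (nat (int a * int n + b)) - f (nat (int c * int n + d))))) \<longlongrightarrow> ereal 2) sequentially"
    by (rule tendsto_ereal)
  hence "liminf (\<lambda>n::nat. ereal (norm (f (nat (int a * int n + b)) - f (nat (int c * int n + d))))) = ereal 2"
    by (intro lim_imp_Liminf) auto
  thus ?thesis using cm by (intro exI[of _ f]) simp
qed

end
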